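(* Let $\mu,\nu$ be Borel probability measures on $[0,1)$, with $\nu$ dyadically doubling with constant $D$ ($\nu(\hat I)\le D\nu(I)$ for $I\in\mathcal{D}\setminus\{[0,1)\}$). There exist constants $\epsilon>0$ and $C\ge1$, depending only on $D$, such that for every $I\in\mathcal{D}$ with $\alpha_{\mu,\nu}(I)<\epsilon$, $$\mu(I)\le C\min\{\mu(I_-),\mu(I_+)\}.$$
   Context: $\mathcal{D}$: dyadic intervals $[j2^{-k},(j+1)2^{-k})\subset[0,1)$, $k\ge0$; $\hat I$ is the parent of $I$, and $I_-,I_+$ are the left and right halves of $I$. Wasserstein distance: $\mathbb{W}_1(\nu_1,\nu_2) := \sup_\psi |\int\psi\,d\nu_1 - \int\psi\,d\nu_2|$ over all $1$-Lipschitz $\psi\colon\mathbb{R}\to\mathbb{R}$ supported on $[0,1]$. $T_I$ is the increasing affine map from $\overline I$ onto $[0,1]$, $\mu_I := T_{I\sharp}(\mu|_I)/\mu(I)$, $\nu_I := T_{I\sharp}(\nu|_I)/\nu(I)$ (zero if the mass vanishes), and $\alpha_{\mu,\nu}(I) := \mathbb{W}_1(\mu_I,\nu_I)$. *)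

theory Defs
  imports "HOL-Probability.Probability"
begin

text \<open>Dyadic interval [j 2^-k, (j+1) 2^-k), indexed by (k, j) with j < 2^k.
  Its parent is (k-1, j div 2) for k \<ge> 1; its left/right halves are (k+1, 2j) and (k+1, 2j+1).\<close>
definition dyint :: "nat \<Rightarrow> nat \<Rightarrow> real set" where
  "dyint k j = {real j / 2 ^ k ..< (real j + 1) / 2 ^ k}"

definition Tdy :: "nat \<Rightarrow> nat \<Rightarrow> real \<Rightarrow> real" where
  "Tdy k j x = 2 ^ k * x - real j"

text \<open>Normalized push-forward T_I # (mu restricted to I) / mu(I) (zero measure if mu(I) = 0).\<close>
definition blowup :: "real measure \<Rightarrow> nat \<Rightarrow> nat \<Rightarrow> real measure" where
  "blowup \<mu> k j = scale_measure (ennreal (1 / measure \<mu> (dyint k j)))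
      (distr (density \<mu> (indicator (dyint k j))) borel (Tdy k j))"

definition W1 :: "real measure \<Rightarrow> real measure \<Rightarrow> real" where
  "W1 \<nu>1 \<nu>2 = (SUP \<psi> \<in> {\<psi> :: real \<Rightarrow> real. 1-lipschitz_on UNIV \<psi> \<and> (\<forall>x. x \<notin> {0..1} \<longrightarrow> \<psi> x = 0)}.
      \<bar>(\<integral>x. \<psi> x \<partial>\<nu>1) - (\<integral>x. \<psi> x \<partial>\<nu>2)\<bar>)"

definition alpha :: "real measure \<Rightarrow> real measure \<Rightarrow> nat \<Rightarrow> nat \<Rightarrow> real" where
  "alpha \<mu> \<nu> k j = W1 (blowup \<mu> k j) (blowup \<nu> k j)"

definition prob_on_unit :: "real measure \<Rightarrow> bool" where
  "prob_on_unit \<mu> \<longleftrightarrow> sets \<mu> = sets borel \<and> prob_space \<mu> \<and> measure \<mu> {0..<1} = 1"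

definition dyadic_doubling :: "real measure \<Rightarrow> real \<Rightarrow> bool" where
  "dyadic_doubling \<nu> D \<longleftrightarrow>
     (\<forall>k j. j < 2 ^ (Suc k) \<longrightarrow> measure \<nu> (dyint k (j div 2)) \<le> D * measure \<nu> (dyint (Suc k) j))"

end

theory Submission
  imports Defs
begin


lemma dyint_sets[measurable]: "dyint k j \<in> sets borel"
  unfolding dyint_def by simp

lemma Tdy_meas[measurable]: "Tdy k j \<in> borel_measurable borel"
  unfolding Tdy_def by measurable

lemma scale_density: "scale_measure (ennreal r) M = density M (\<lambda>_. ennreal r)"
proof (rule measure_eqI)
  show "sets (scale_measure (ennreal r) M) = sets (density M (\<lambda>_. ennreal r))" by simp
  fix A assume "A \<in> sets (scale_measure (ennreal r) M)"
  then have A: "A \<in> sets M" by simp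
  show "emeasure (scale_measure (ennreal r) M) A = emeasure (density M (\<lambda>_. ennreal r)) A"
    using A by (simp add: emeasure_density nn_integral_cmult_indicator)
qed

lemma int_const_density:
  fixes \<psi> :: "'a \<Rightarrow> real"
  assumes "\<psi> \<in> borel_measurable N" "0 \<le> c"
  shows "(\<integral>x. \<psi> x \<partial>density N (\<lambda>_. ennreal c)) = c * (\<integral>x. \<psi> x \<partial>N)"
proof -
  have "(\<integral>x. \<psi> x \<partial>density N (\<lambda>_. ennreal c)) = (\<integral>x. c * \<psi> x \<partial>N)"
  proof (rule integral_real_density)
    show "(\<lambda>_. c) \<in> borel_measurable N" by (rule borel_measurable_const)
    show "AE x in N. 0 \<le> c" using assms(2) by (rule AE_I2)
    show "\<psi> \<in> borel_measurable N" by fact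
  qed
  then show ?thesis by (simp only: integral_mult_right_zero)
qed

lemma ind_eq: "(indicator A :: 'a \<Rightarrow> ennreal) = (\<lambda>x. ennreal (indicator A x))"
  by (rule ext) (simp add: indicator_def)

lemma int_ind_density:
  fixes \<psi> :: "'a \<Rightarrow> real"
  assumes "\<psi> \<in> borel_measurable N" "A \<in> sets N"
  shows "(\<integral>x. \<psi> x \<partial>density N (indicator A)) = (\<integral>x. indicator A x * \<psi> x \<partial>N)"
  unfolding ind_eq
proof (rule integral_real_density)
  show "(indicator A :: 'a \<Rightarrow> real) \<in> borel_measurable N" using assms(2) by (rule borel_measurable_indicator)
  show "AE x in N. 0 \<le> (indicator A x :: real)" by (rule AE_I2) (simp add: indicator_def)
  show "\<psi> \<in> borel_measurable N" by fact
qed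

lemma blowup_integral:
  fixes \<psi> :: "real \<Rightarrow> real"
  assumes S: "sets \<mu> = sets borel" and PM: "\<psi> \<in> borel_measurable borel"
  shows "(\<integral>x. \<psi> x \<partial>blowup \<mu> k j) =
     (1 / measure \<mu> (dyint k j)) * (\<integral>x. indicator (dyint k j) x * \<psi> (Tdy k j x) \<partial>\<mu>)"
proof -
  let ?N = "density \<mu> (indicator (dyint k j))"
  have m: "0 \<le> 1 / measure \<mu> (dyint k j)" by simp
  have SN: "sets ?N = sets borel" using S by simp
  have e1: "measurable (distr ?N borel (Tdy k j)) borel = measurable borel borel"
    by (rule measurable_cong_sets) simp_all
  have P1: "\<psi> \<in> borel_measurable (distr ?N borel (Tdy k j))"
    unfolding e1 by (rule PM)
  have e2: "measurable ?N borel = measurable borel borel"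
    by (rule measurable_cong_sets[OF SN refl])
  have TM: "Tdy k j \<in> measurable ?N borel"
    unfolding e2 by (rule Tdy_meas)
  have e3: "measurable \<mu> borel = measurable borel borel"
    by (rule measurable_cong_sets[OF S refl])
  have P2: "(\<lambda>x. \<psi> (Tdy k j x)) \<in> borel_measurable \<mu>"
    unfolding e3 using measurable_comp[OF Tdy_meas PM] by (simp add: comp_def)
  have I: "dyint k j \<in> sets \<mu>" using S by simp
  have "(\<integral>x. \<psi> x \<partial>blowup \<mu> k j) = (1 / measure \<mu> (dyint k j)) * (\<integral>x. \<psi> x \<partial>distr ?N borel (Tdy k j))"
    unfolding blowup_def scale_density by (rule int_const_density[OF P1 m])
  also have "(\<integral>x. \<psi> x \<partial>distr ?N borel (Tdy k j)) = (\<integral>x. \<psi> (Tdy k j x) \<partial>?N)"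
    by (rule integral_distr[OF TM PM])
  also have "\<dots> = (\<integral>x. indicator (dyint k j) x * \<psi> (Tdy k j x) \<partial>\<mu>)"
    by (rule int_ind_density[OF P2 I])
  finally show ?thesis .
qed



definition cls :: "(real \<Rightarrow> real) set" where
 "cls = {\<psi> :: real \<Rightarrow> real. 1-lipschitz_on UNIV \<psi> \<and> (\<forall>x. x \<notin> {0..1} \<longrightarrow> \<psi> x = 0)}"

lemma cls_bound: assumes "\<psi> \<in> cls" shows "\<bar>\<psi> x\<bar> \<le> 2"
proof (cases "x \<in> {0..1}")
  case True
  have L: "1-lipschitz_on UNIV \<psi>" using assms unfolding cls_def by auto
  have "dist (\<psi> x) (\<psi> 2) \<le> 1 * dist x 2" by (rule lipschitz_onD[OF L]) auto
  moreover have "\<psi> 2 = 0" using assms unfolding cls_def by auto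
  ultimately have "\<bar>\<psi> x\<bar> \<le> \<bar>x - 2\<bar>" by (simp add: dist_real_def)
  then show ?thesis using True by auto
next
  case False then show ?thesis using assms unfolding cls_def by auto
qed

lemma cls_meas: assumes "\<psi> \<in> cls" shows "\<psi> \<in> borel_measurable borel"
  using assms unfolding cls_def
  by (auto intro!: borel_measurable_continuous_onI lipschitz_on_continuous_on)

lemma int_bound_le:
  fixes f g :: "real \<Rightarrow> real"
  assumes "finite_measure M" "sets M = sets borel" "f \<in> borel_measurable borel" "g \<in> borel_measurable borel"
   "\<And>x. \<bar>f x\<bar> \<le> B" "\<And>x. \<bar>g x\<bar> \<le> B" "\<And>x. f x \<le> g x"
  shows "(\<integral>x. f x \<partial>M) \<le> (\<integral>x. g x \<partial>M)"
proof -
  interpret finite_measure M by fact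
  have fm: "f \<in> borel_measurable M" "g \<in> borel_measurable M"
    using assms(3,4) unfolding measurable_cong_sets[OF assms(2) refl] by simp_all
  have i1: "integrable M f"
    by (rule integrable_const_bound[where B=B]) (use assms(5) fm(1) in auto)
  have i2: "integrable M g"
    by (rule integrable_const_bound[where B=B]) (use assms(6) fm(2) in auto)
  show ?thesis by (rule integral_mono[OF i1 i2 assms(7)])
qed

lemma cls_bound2: assumes "\<psi> \<in> cls" shows "\<psi> x \<le> 2" "-2 \<le> \<psi> x"
  using cls_bound[OF assms, of x] by auto

lemma abs_div_le2: fixes m X :: real assumes "0 \<le> m" "\<bar>X\<bar> \<le> 2 * m" shows "\<bar>1 / m * X\<bar> \<le> 2"
proof (cases "m = 0")
  case False
  then have "\<bar>1 / m * X\<bar> = \<bar>X\<bar> / m" using assms by (simp add: abs_mult)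
  also have "\<dots> \<le> 2"
  proof -
    have mp: "0 < m" using False assms(1) by linarith
    show ?thesis unfolding pos_divide_le_eq[OF mp] using assms(2) by linarith
  qed
  finally show ?thesis .
qed simp

lemma meas_facts:
  fixes \<psi> :: "real \<Rightarrow> real"
  assumes [measurable]: "\<psi> \<in> borel_measurable borel"
  shows "(\<lambda>x. indicator (dyint k j) x * \<psi> (Tdy k j x)) \<in> borel_measurable borel"
  by measurable

lemma meas_facts2:
  "(\<lambda>x. c * indicator (dyint k j) x :: real) \<in> borel_measurable borel"
  by measurable

lemma space_borelish: "sets \<mu> = sets borel \<Longrightarrow> space \<mu> = UNIV"
  using sets_eq_imp_space_eq[of \<mu> borel] by simp

lemma int_c_ind:
  assumes "sets \<mu> = sets borel"
  shows "(\<integral>x. c * indicator A x \<partial>\<mu>) = c * measure \<mu> A"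
  using space_borelish[OF assms] by simp

lemma blowup_bound:
  assumes "prob_on_unit \<mu>" "\<psi> \<in> cls"
  shows "\<bar>\<integral>x. \<psi> x \<partial>blowup \<mu> k j\<bar> \<le> 2"
proof -
  have S: "sets \<mu> = sets borel" and P: "prob_space \<mu>" using assms(1) unfolding prob_on_unit_def by auto
  have FM: "finite_measure \<mu>" using P unfolding prob_space_def by simp
  have PM: "\<psi> \<in> borel_measurable borel" using cls_meas assms(2) .
  let ?m = "measure \<mu> (dyint k j)"
  let ?X = "\<integral>x. indicator (dyint k j) x * \<psi> (Tdy k j x) \<partial>\<mu>"
  have b1: "\<psi> y \<le> 2" for y using cls_bound2(1)[OF assms(2)] .
  have b2: "-2 \<le> \<psi> y" for y using cls_bound2(2)[OF assms(2)] .
  have b3: "- \<psi> y \<le> 2" for y using b2[of y] by linarith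
  note b = b1 b2 b3
  have "?X \<le> (\<integral>x. 2 * indicator (dyint k j) x \<partial>\<mu>)"
    by (rule int_bound_le[where B=2, OF FM S meas_facts[OF PM] meas_facts2]) (auto simp: indicator_def b abs_le_iff)
  moreover have "(\<integral>x. (-2) * indicator (dyint k j) x \<partial>\<mu>) \<le> ?X"
    by (rule int_bound_le[where B=2, OF FM S meas_facts2 meas_facts[OF PM]]) (auto simp: indicator_def b abs_le_iff)
  ultimately have "\<bar>?X\<bar> \<le> 2 * ?m" unfolding int_c_ind[OF S] by (simp add: abs_le_iff)
  then have "\<bar>1 / ?m * ?X\<bar> \<le> 2"
    by (rule abs_div_le2[OF measure_nonneg])
  then show ?thesis unfolding blowup_integral[OF S PM] .
qed

lemma W1_ge:
  assumes "prob_on_unit \<mu>" "prob_on_unit \<nu>" "\<psi> \<in> cls"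
  shows "\<bar>(\<integral>x. \<psi> x \<partial>blowup \<mu> k j) - (\<integral>x. \<psi> x \<partial>blowup \<nu> k j)\<bar> \<le> alpha \<mu> \<nu> k j"
proof -
  define F :: "(real \<Rightarrow> real) \<Rightarrow> real" where "F = (\<lambda>\<phi>. \<bar>(\<integral>x. \<phi> x \<partial>blowup \<mu> k j) - (\<integral>x. \<phi> x \<partial>blowup \<nu> k j)\<bar>)"
  have B: "bdd_above (F ` cls)"
  proof (rule bdd_aboveI[where M="4::real"])
    fix y :: real assume "y \<in> F ` cls"
    then obtain \<phi> where ph: "\<phi> \<in> cls" and y: "y = F \<phi>" by auto
    have "\<bar>\<integral>x. \<phi> x \<partial>blowup \<mu> k j\<bar> \<le> 2" by (rule blowup_bound[OF assms(1) ph])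
    moreover have "\<bar>\<integral>x. \<phi> x \<partial>blowup \<nu> k j\<bar> \<le> 2" by (rule blowup_bound[OF assms(2) ph])
    ultimately show "y \<le> 4" unfolding y F_def by linarith
  qed
  have e: "alpha \<mu> \<nu> k j = (SUP \<phi>\<in>cls. F \<phi>)"
    unfolding alpha_def W1_def F_def cls_def by (rule refl)
  have "F \<psi> \<le> alpha \<mu> \<nu> k j" unfolding e by (rule cSUP_upper[OF assms(3) B])
  then show ?thesis unfolding F_def .
qed

lemma tent_cls:
  fixes c :: real
  assumes "1/4 \<le> c" "c \<le> 3/4"
  shows "(\<lambda>x. max 0 (1/4 - \<bar>x - c\<bar>)) \<in> cls"
  unfolding cls_def
proof (intro CollectI conjI allI impI)
  show "1-lipschitz_on UNIV (\<lambda>x. max 0 (1/4 - \<bar>x - c\<bar>))"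
  proof (rule lipschitz_onI)
    fix x y :: real
    show "dist (max 0 (1/4 - \<bar>x - c\<bar>)) (max 0 (1/4 - \<bar>y - c\<bar>)) \<le> 1 * dist x y"
      unfolding dist_real_def by (simp add: max_def abs_if)
  qed simp
  fix x :: real assume "x \<notin> {0..1}"
  then show "max 0 (1/4 - \<bar>x - c\<bar>) = 0" using assms by (auto simp: max_def abs_if)
qed

lemma mem_dy: "x \<in> dyint (k+n) (2^n*j+i) \<longleftrightarrow> real i / 2^n \<le> Tdy k j x \<and> Tdy k j x < (real i + 1)/2^n"
proof -
  have p: "(2::real)^(k+n) = 2^k*2^n" by (simp add: power_add)
  have q: "(0::real) < 2^k" "(0::real) < 2^n" by simp_all
  show ?thesis unfolding dyint_def Tdy_def p using q
    by (simp add: field_simps)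
qed

lemma mem_dy0: "x \<in> dyint k j \<longleftrightarrow> 0 \<le> Tdy k j x \<and> Tdy k j x < 1"
  using mem_dy[of x k 0 j 0] by simp

lemma mem_L: "x \<in> dyint (Suc k) (2*j) \<longleftrightarrow> 0 \<le> Tdy k j x \<and> Tdy k j x < 1/2"
  using mem_dy[of x k 1 j 0] by simp
lemma mem_R: "x \<in> dyint (Suc k) (2*j+1) \<longleftrightarrow> 1/2 \<le> Tdy k j x \<and> Tdy k j x < 1"
  using mem_dy[of x k 1 j 1] by simp
lemma mem_LJ: "x \<in> dyint (Suc (Suc (Suc k))) (8*j+1) \<longleftrightarrow> 1/8 \<le> Tdy k j x \<and> Tdy k j x < 1/4"
  using mem_dy[of x k 3 j 1] by (simp add: numeral_eq_Suc)
lemma mem_RJ: "x \<in> dyint (Suc (Suc (Suc k))) (8*j+6) \<longleftrightarrow> 3/4 \<le> Tdy k j x \<and> Tdy k j x < 7/8"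
  using mem_dy[of x k 3 j 6] by (simp add: numeral_eq_Suc)

lemma meas_c_ind: assumes [measurable]: "A \<in> sets borel" shows "(\<lambda>x. c * indicator A x :: real) \<in> borel_measurable borel"
  by measurable

lemma side:
  assumes PU: "prob_on_unit \<mu>" "prob_on_unit \<nu>" and C: "\<psi> \<in> cls"
    and H: "H \<in> sets borel" and J: "J \<in> sets borel"
    and up: "\<And>x. indicator (dyint k j) x * \<psi> (Tdy k j x) \<le> (1/4) * indicator H x"
    and lo: "\<And>x. (1/8) * indicator J x \<le> indicator (dyint k j) x * \<psi> (Tdy k j x)"
    and E: "0 < E" and nE: "measure \<nu> (dyint k j) \<le> E * measure \<nu> J"
    and npos: "0 < measure \<nu> (dyint k j)" and mpos: "0 < measure \<mu> (dyint k j)"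
    and al: "alpha \<mu> \<nu> k j < 1 / (16 * E)"
  shows "measure \<mu> (dyint k j) \<le> 4 * E * measure \<mu> H"
proof -
  have S1: "sets \<mu> = sets borel" and FM1: "finite_measure \<mu>"
    using PU(1) unfolding prob_on_unit_def prob_space_def by auto
  have S2: "sets \<nu> = sets borel" and FM2: "finite_measure \<nu>"
    using PU(2) unfolding prob_on_unit_def prob_space_def by auto
  have PM: "\<psi> \<in> borel_measurable borel" using cls_meas C .
  have b1: "\<psi> y \<le> 2" for y using cls_bound2(1)[OF C] .
  have b2: "-2 \<le> \<psi> y" for y using cls_bound2(2)[OF C] .
  have b3: "- \<psi> y \<le> 2" for y using b2[of y] by linarith
  note b = b1 b2 b3
  let ?m = "measure \<mu> (dyint k j)" and ?n = "measure \<nu> (dyint k j)"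
  let ?X = "\<integral>x. indicator (dyint k j) x * \<psi> (Tdy k j x) \<partial>\<mu>"
  let ?Y = "\<integral>x. indicator (dyint k j) x * \<psi> (Tdy k j x) \<partial>\<nu>"
  have X: "?X \<le> (1/4) * measure \<mu> H"
  proof -
    have "?X \<le> (\<integral>x. (1/4) * indicator H x \<partial>\<mu>)"
      by (rule int_bound_le[where B=2, OF FM1 S1 meas_facts[OF PM] meas_c_ind[OF H] _ _ up])
         (auto simp: indicator_def b abs_le_iff)
    then show ?thesis unfolding int_c_ind[OF S1] .
  qed
  have Y: "(1/8) * measure \<nu> J \<le> ?Y"
  proof -
    have "(\<integral>x. (1/8) * indicator J x \<partial>\<nu>) \<le> ?Y"
      by (rule int_bound_le[where B=2, OF FM2 S2 meas_c_ind[OF J] meas_facts[OF PM] _ _ lo])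
         (auto simp: indicator_def b abs_le_iff)
    then show ?thesis unfolding int_c_ind[OF S2] .
  qed
  have W: "\<bar>(1/?m) * ?X - (1/?n) * ?Y\<bar> < 1 / (16 * E)"
    using W1_ge[OF PU C, of k j] al unfolding blowup_integral[OF S1 PM] blowup_integral[OF S2 PM]
    by linarith
  have nJ: "0 \<le> measure \<nu> J" by simp
  have "1 / (8 * E) \<le> (1/?n) * ((1/8) * measure \<nu> J)"
    using npos E nE by (simp add: field_simps)
  also have "\<dots> \<le> (1/?n) * ?Y" by (rule mult_left_mono[OF Y]) (use npos in simp)
  finally have Yb: "1 / (8 * E) \<le> (1/?n) * ?Y" .
  have Xb: "(1/?m) * ?X \<le> (1/?m) * ((1/4) * measure \<mu> H)" by (rule mult_left_mono[OF X]) (use mpos in simp)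
  have e: "1 / (8 * E) - 1 / (16 * E) = 1 / (16 * E)" using E by (simp add: field_simps)
  have "1 / (16 * E) < (1/?m) * ((1/4) * measure \<mu> H)"
    using W Yb Xb e unfolding abs_less_iff by linarith
  then show ?thesis using mpos E by (simp add: field_simps)
qed



lemma dd_pos:
  assumes PU: "prob_on_unit \<nu>" and DD: "dyadic_doubling \<nu> D"
  shows "j < 2^k \<Longrightarrow> 0 < measure \<nu> (dyint k j)"
proof (induction k arbitrary: j)
  case 0
  then have "j = 0" by simp
  moreover have "dyint 0 0 = {0..<1}" unfolding dyint_def by simp
  ultimately show ?case using PU unfolding prob_on_unit_def by simp
next
  case (Suc k)
  have jd: "j div 2 < 2^k" using Suc.prems by simp
  have IH: "0 < measure \<nu> (dyint k (j div 2))" by (rule Suc.IH[OF jd])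
  have le: "measure \<nu> (dyint k (j div 2)) \<le> D * measure \<nu> (dyint (Suc k) j)"
    using DD Suc.prems unfolding dyadic_doubling_def by blast
  have nn: "0 \<le> measure \<nu> (dyint (Suc k) j)" by simp
  show ?case
  proof (rule ccontr)
    assume "\<not> 0 < measure \<nu> (dyint (Suc k) j)"
    then have "measure \<nu> (dyint (Suc k) j) = 0" using nn by linarith
    then show False using le IH by simp
  qed
qed

lemma chain3:
  assumes DD: "dyadic_doubling \<nu> D" and D1: "1 \<le> D"
    and a: "a \<le> D * b" and b: "b \<le> D * c" and c: "c \<le> D * d"
  shows "a \<le> D^3 * d"
proof -
  have D0: "0 \<le> D" using D1 by simp
  have "D * b \<le> D * (D * c)" by (rule mult_left_mono[OF b D0])
  moreover have "D * (D * c) \<le> D * (D * (D * d))"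
    by (rule mult_left_mono[OF mult_left_mono[OF c D0] D0])
  ultimately show ?thesis using a by (simp add: power3_eq_cube mult.assoc)
qed

lemma chainL:
  assumes DD: "dyadic_doubling \<nu> D" and D1: "1 \<le> D" and j: "j < 2^k"
  shows "measure \<nu> (dyint k j) \<le> D^3 * measure \<nu> (dyint (Suc (Suc (Suc k))) (8*j+1))"
proof (rule chain3[OF DD D1])
  have d: "dyadic_doubling \<nu> D" by fact
  note dd = d[unfolded dyadic_doubling_def, rule_format]
  have e1: "(2*j) div 2 = j" "(4*j) div 2 = 2*j" "(8*j+1) div 2 = 4*j" by presburger+
  show "measure \<nu> (dyint k j) \<le> D * measure \<nu> (dyint (Suc k) (2*j))"
    using dd[of "2*j" k] j e1 by simp
  show "measure \<nu> (dyint (Suc k) (2*j)) \<le> D * measure \<nu> (dyint (Suc (Suc k)) (4*j))"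
    using dd[of "4*j" "Suc k"] j e1 by simp
  show "measure \<nu> (dyint (Suc (Suc k)) (4*j)) \<le> D * measure \<nu> (dyint (Suc (Suc (Suc k))) (8*j+1))"
    using dd[of "8*j+1" "Suc (Suc k)"] j e1 by simp
qed

lemma chainR:
  assumes DD: "dyadic_doubling \<nu> D" and D1: "1 \<le> D" and j: "j < 2^k"
  shows "measure \<nu> (dyint k j) \<le> D^3 * measure \<nu> (dyint (Suc (Suc (Suc k))) (8*j+6))"
proof (rule chain3[OF DD D1])
  have d: "dyadic_doubling \<nu> D" by fact
  note dd = d[unfolded dyadic_doubling_def, rule_format]
  have e1: "(2*j+1) div 2 = j" "(4*j+3) div 2 = 2*j+1" "(8*j+6) div 2 = 4*j+3" by presburger+
  show "measure \<nu> (dyint k j) \<le> D * measure \<nu> (dyint (Suc k) (2*j+1))"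
    using dd[of "2*j+1" k] j e1 by simp
  show "measure \<nu> (dyint (Suc k) (2*j+1)) \<le> D * measure \<nu> (dyint (Suc (Suc k)) (4*j+3))"
    using dd[of "4*j+3" "Suc k"] j e1 by simp
  show "measure \<nu> (dyint (Suc (Suc k)) (4*j+3)) \<le> D * measure \<nu> (dyint (Suc (Suc (Suc k))) (8*j+6))"
    using dd[of "8*j+6" "Suc (Suc k)"] j e1 by simp
qed

lemma upL: "indicator (dyint k j) x * (\<lambda>x. max 0 (1/4 - \<bar>x - 1/4\<bar>)) (Tdy k j x) \<le> (1/4) * indicator (dyint (Suc k) (2*j)) x"
  using mem_dy0[of x k j] mem_L[of x k j] by (auto simp: indicator_def max_def abs_if)
lemma loL: "(1/8) * indicator (dyint (Suc (Suc (Suc k))) (8*j+1)) x \<le> indicator (dyint k j) x * (\<lambda>x. max 0 (1/4 - \<bar>x - 1/4\<bar>)) (Tdy k j x)"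
  using mem_dy0[of x k j] mem_LJ[of x k j] by (auto simp: indicator_def max_def abs_if)
lemma upR: "indicator (dyint k j) x * (\<lambda>x. max 0 (1/4 - \<bar>x - 3/4\<bar>)) (Tdy k j x) \<le> (1/4) * indicator (dyint (Suc k) (2*j+1)) x"
  using mem_dy0[of x k j] mem_R[of x k j] by (auto simp: indicator_def max_def abs_if)
lemma loR: "(1/8) * indicator (dyint (Suc (Suc (Suc k))) (8*j+6)) x \<le> indicator (dyint k j) x * (\<lambda>x. max 0 (1/4 - \<bar>x - 3/4\<bar>)) (Tdy k j x)"
  using mem_dy0[of x k j] mem_RJ[of x k j] by (auto simp: indicator_def max_def abs_if)

theorem mainTheorem8:
  fixes D :: real
  shows "\<exists>\<epsilon> C. \<epsilon> > 0 \<and> C \<ge> 1 \<and>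
    (\<forall>\<mu> \<nu>. prob_on_unit \<mu> \<and> prob_on_unit \<nu> \<and> dyadic_doubling \<nu> D \<longrightarrow>
       (\<forall>k j. j < 2 ^ k \<and> alpha \<mu> \<nu> k j < \<epsilon> \<longrightarrow>
          measure \<mu> (dyint k j) \<le>
            C * min (measure \<mu> (dyint (Suc k) (2 * j))) (measure \<mu> (dyint (Suc k) (2 * j + 1)))))"
proof -
  define D' where "D' = max D 1"
  define E where "E = D'^3"
  have D1: "1 \<le> D'" unfolding D'_def by simp
  have E1: "1 \<le> E" unfolding E_def using D1 by simp
  have E0: "0 < E" using E1 by simp
  show ?thesis
  proof (rule exI[of _ "1/(16*E)"], rule exI[of _ "4*E"], intro conjI allI impI)
    show "0 < 1/(16*E)" using E0 by simp
    show "1 \<le> 4*E" using E1 by simp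
    fix \<mu> \<nu> k j
    assume A: "prob_on_unit \<mu> \<and> prob_on_unit \<nu> \<and> dyadic_doubling \<nu> D"
      and B: "j < 2^k \<and> alpha \<mu> \<nu> k j < 1/(16*E)"
    have PU1: "prob_on_unit \<mu>" and PU2: "prob_on_unit \<nu>" and DD0: "dyadic_doubling \<nu> D" using A by auto
    have j: "j < 2^k" and al: "alpha \<mu> \<nu> k j < 1/(16*E)" using B by auto
    have DD: "dyadic_doubling \<nu> D'"
      unfolding dyadic_doubling_def
    proof (intro allI impI)
      fix k j :: nat assume "j < 2 ^ Suc k"
      then have "measure \<nu> (dyint k (j div 2)) \<le> D * measure \<nu> (dyint (Suc k) j)"
        using DD0 unfolding dyadic_doubling_def by blast
      also have "\<dots> \<le> D' * measure \<nu> (dyint (Suc k) j)"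
        by (rule mult_right_mono) (auto simp: D'_def)
      finally show "measure \<nu> (dyint k (j div 2)) \<le> D' * measure \<nu> (dyint (Suc k) j)" .
    qed
    have npos: "0 < measure \<nu> (dyint k j)" by (rule dd_pos[OF PU2 DD j])
    show "measure \<mu> (dyint k j) \<le> 4 * E * min (measure \<mu> (dyint (Suc k) (2 * j))) (measure \<mu> (dyint (Suc k) (2 * j + 1)))"
    proof (cases "measure \<mu> (dyint k j) = 0")
      case True
      then show ?thesis using E0 by simp
    next
      case False
      then have mpos: "0 < measure \<mu> (dyint k j)" using measure_nonneg[of \<mu> "dyint k j"] by linarith
      have L: "measure \<mu> (dyint k j) \<le> 4 * E * measure \<mu> (dyint (Suc k) (2 * j))"
        by (rule side[OF PU1 PU2 tent_cls[of "1/4"] dyint_sets dyint_sets upL loL E0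
              chainL[OF DD D1 j, folded E_def] npos mpos al]) simp_all
      have R: "measure \<mu> (dyint k j) \<le> 4 * E * measure \<mu> (dyint (Suc k) (2 * j + 1))"
        by (rule side[OF PU1 PU2 tent_cls[of "3/4"] dyint_sets dyint_sets upR loR E0
              chainR[OF DD D1 j, folded E_def] npos mpos al]) simp_all
      show ?thesis using L R by (simp add: min_def)
    qed
  qed
qed

end
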